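(* Let $K_1,K_2:\mathbb R\to(0,\infty)$ and $a:\mathbb R^2\to(0,\infty)$ be positive, bounded, smooth, and let $d\ge0$ be a constant. Consider $$\begin{aligned}\dot x_1&=x_1\Big[r_1\Big(1-\frac{x_1}{K_1(u_1)}\Big)-\frac{a(u_1,u_2)x_2}{1+ha(u_1,u_2)x_1}\Big],\\ \dot x_2&=x_2\Big[\frac{ea(u_1,u_2)x_1}{1+ha(u_1,u_2)x_1}-d+r_2\Big(1-\frac{x_2}{K_2(u_2)}\Big)\Big],\\ \dot u_1&=\sigma_1^2\Big[\frac{r_1x_1K_1'(u_1)}{K_1(u_1)^2}-\frac{x_2a_{u_1}(u_1,u_2)}{(1+ha(u_1,u_2)x_1)^2}\Big],\\ \dot u_2&=\sigma_2^2\Big[\frac{ex_1a_{u_2}(u_1,u_2)}{(1+ha(u_1,u_2)x_1)^2}+\frac{r_2x_2K_2'(u_2)}{K_2(u_2)^2}\Big],\end{aligned}$$ with constants $r_1,r_2,h,e,\sigma_1,\sigma_2>0$. (i) The host-only equilibrium $(K_1(u_1^* ),0,u_1^*,u_2^* )$ exists if $K_1'(u_1^* )=a_{u_2}(u_1^*,u_2^* )=0$, and it is locally asymptotically stable if $0<\frac{ea(u_1^*,u_2^* )K_1(u_1^* )}{1+ha(u_1^*,u_2^* )K_1(u_1^* )}<d-r_2$, $K_1''(u_1^* )<0$ and $a_{u_2u_2}(u_1^*,u_2^* )<0$. (ii) If $d<r_2$, the parasite-only equilibrium $\big(0,K_2(u_2^* )(1-\frac{d}{r_2}),u_1^*,u_2^*\big)$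 exists if $K_2'(u_2^* )=a_{u_1}(u_1^*,u_2^* )=0$, and it is locally asymptotically stable if $\frac{r_1}{a(u_1^*,u_2^* )}<K_2(u_2^* )(1-\frac{d}{r_2})$, $a_{u_1u_1}(u_1^*,u_2^* )>0$ and $K_2''(u_2^* )<0$.
   Context: Co-evolutionary host–parasite model with trait-independent parasite death rate $d$; $x_1,x_2$ host and parasite densities, $u_1,u_2$ mean traits, subscripts on $a$ denote partial derivatives. *)

theory Defs
  imports "HOL-Analysis.Analysis"
begin

definition pd1 :: "(real \<Rightarrow> real \<Rightarrow> real) \<Rightarrow> real \<Rightarrow> real \<Rightarrow> real" where
  "pd1 g x y = deriv (\<lambda>s. g s y) x"

definition pd2 :: "(real \<Rightarrow> real \<Rightarrow> real) \<Rightarrow> real \<Rightarrow> real \<Rightarrow> real" where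
  "pd2 g x y = deriv (\<lambda>s. g x s) y"

definition smooth1 :: "(real \<Rightarrow> real) \<Rightarrow> bool" where
  "smooth1 f \<longleftrightarrow> (\<forall>n x. ((deriv ^^ n) f) differentiable (at x))"

definition iter_pd :: "bool list \<Rightarrow> (real \<Rightarrow> real \<Rightarrow> real) \<Rightarrow> (real \<Rightarrow> real \<Rightarrow> real)" where
  "iter_pd ds g = foldr (\<lambda>b h. if b then pd1 h else pd2 h) ds g"

definition smooth2 :: "(real \<Rightarrow> real \<Rightarrow> real) \<Rightarrow> bool" where
  "smooth2 g \<longleftrightarrow> (\<forall>ds p. (\<lambda>(x::real, y::real). iter_pd ds g x y) differentiable (at p))"

type_synonym state = "real \<times> real \<times> real \<times> real"

definition hp_field ::
  "real \<Rightarrow> real \<Rightarrow> real \<Rightarrow> real \<Rightarrow> real \<Rightarrow> real \<Rightarrow> real \<Rightarrow>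
   (real \<Rightarrow> real) \<Rightarrow> (real \<Rightarrow> real) \<Rightarrow> (real \<Rightarrow> real \<Rightarrow> real) \<Rightarrow> state \<Rightarrow> state" where
  "hp_field r1 r2 h e d s1 s2 K1 K2 a = (\<lambda>(x1, x2, u1, u2).
     (x1 * (r1 * (1 - x1 / K1 u1) - a u1 u2 * x2 / (1 + h * a u1 u2 * x1)),
      x2 * (e * a u1 u2 * x1 / (1 + h * a u1 u2 * x1) - d + r2 * (1 - x2 / K2 u2)),
      s1\<^sup>2 * (r1 * x1 * deriv K1 u1 / (K1 u1)\<^sup>2 - x2 * pd1 a u1 u2 / (1 + h * a u1 u2 * x1)\<^sup>2),
      s2\<^sup>2 * (e * x1 * pd2 a u1 u2 / (1 + h * a u1 u2 * x1)\<^sup>2 + r2 * x2 * deriv K2 u2 / (K2 u2)\<^sup>2)))"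

definition is_equilibrium :: "('a::real_normed_vector \<Rightarrow> 'a) \<Rightarrow> 'a \<Rightarrow> bool" where
  "is_equilibrium f p \<longleftrightarrow> f p = 0"

definition solution_on :: "('a::real_normed_vector \<Rightarrow> 'a) \<Rightarrow> real \<Rightarrow> (real \<Rightarrow> 'a) \<Rightarrow> bool" where
  "solution_on f T x \<longleftrightarrow>
     (\<forall>t\<in>{0..T}. (x has_vector_derivative f (x t)) (at t within {0..T}))"

definition global_solution :: "('a::real_normed_vector \<Rightarrow> 'a) \<Rightarrow> (real \<Rightarrow> 'a) \<Rightarrow> bool" where
  "global_solution f x \<longleftrightarrow>
     (\<forall>t\<ge>0. (x has_vector_derivative f (x t)) (at t within {0..}))"

definition loc_asymp_stable :: "('a::real_normed_vector \<Rightarrow> 'a) \<Rightarrow> 'a \<Rightarrow> bool" where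
  "loc_asymp_stable f p \<longleftrightarrow>
     is_equilibrium f p \<and>
     (\<forall>\<epsilon>>0. \<exists>\<delta>>0. \<forall>x T. 0 \<le> T \<longrightarrow> solution_on f T x \<longrightarrow> dist (x 0) p < \<delta> \<longrightarrow>
          (\<forall>t\<in>{0..T}. dist (x t) p < \<epsilon>)) \<and>
     (\<exists>\<eta>>0. \<forall>x. global_solution f x \<longrightarrow> dist (x 0) p < \<eta> \<longrightarrow>
          (x \<longlongrightarrow> p) at_top)"

end

theory Submission
  imports Defs
begin


lemma sol_deriv_V:
  fixes x :: "real \<Rightarrow> 'a::real_normed_vector"
  assumes Vd: "\<And>y. (V has_derivative G y) (at y)"
    and xd: "(x has_vector_derivative v) (at t within S)"
  shows "((\<lambda>t. V (x t)) has_real_derivative G (x t) v) (at t within S)"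
proof -
  have "(V \<circ> x has_vector_derivative G (x t) v) (at t within S)"
    by (rule vector_derivative_diff_chain_within[OF xd has_derivative_at_withinI[OF Vd]])
  then show ?thesis by (simp add: has_real_derivative_iff_has_vector_derivative o_def)
qed

lemma stay:
  fixes f :: "'a::real_normed_vector \<Rightarrow> 'a" and V :: "'a \<Rightarrow> real"
  assumes Vd: "\<And>y. (V has_derivative G y) (at y)"
    and Vlo: "\<And>y. \<alpha> * (norm (y - p))\<^sup>2 \<le> V y"
    and Vhi: "\<And>y. V y \<le> \<beta> * (norm (y - p))\<^sup>2"
    and al: "\<alpha> > 0" and rho: "0 < \<rho>" "\<rho> \<le> r"
    and dec: "\<And>y. norm (y - p) < r \<Longrightarrow> G y (f y) \<le> 0"
    and sol: "solution_on f T x" and T: "0 \<le> T"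
    and n0: "norm (x 0 - p) < \<rho>" and b: "\<beta> * (norm (x 0 - p))\<^sup>2 < \<alpha> * \<rho>\<^sup>2"
  shows "\<forall>t\<in>{0..T}. norm (x t - p) < \<rho> \<and> V (x t) \<le> V (x 0)"
proof -
  have gd: "\<And>t. t \<in> {0..T} \<Longrightarrow> ((\<lambda>t. V (x t)) has_real_derivative G (x t) (f (x t))) (at t within {0..T})"
    using sol unfolding solution_on_def by (intro sol_deriv_V[OF Vd]) auto
  have xc: "continuous_on {0..T} x"
    using sol unfolding solution_on_def
    by (metis continuous_on_eq_continuous_within has_vector_derivative_continuous)
  have gc: "continuous_on {0..T} (\<lambda>t. V (x t))"
    using gd by (metis continuous_on_eq_continuous_within DERIV_continuous)
  have nc: "continuous_on {0..T} (\<lambda>t. norm (x t - p))"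
    by (intro continuous_intros xc)
  have mono: "V (x s) \<le> V (x 0)" if s: "0 \<le> s" "s \<le> T" and inb: "\<And>t. 0 \<le> t \<Longrightarrow> t < s \<Longrightarrow> norm (x t - p) < r" for s
  proof -
    have "V (x 0) \<ge> V (x s)"
    proof (rule DERIV_nonpos_imp_decreasing_open[OF s(1)])
      fix t assume t: "0 < t" "t < s"
      have "((\<lambda>t. V (x t)) has_real_derivative G (x t) (f (x t))) (at t within {0..T})"
        using gd t s by auto
      moreover have "at t within {0..T} = at t" using t s by (intro at_within_Icc_at) auto
      ultimately show "\<exists>y. ((\<lambda>t. V (x t)) has_real_derivative y) (at t) \<and> y \<le> 0"
        using dec inb t by auto
    next
      show "continuous_on {0..s} (\<lambda>t. V (x t))"
        using gc s by (elim continuous_on_subset) auto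
    qed
    then show ?thesis by simp
  qed
  have allin: "\<forall>t\<in>{0..T}. norm (x t - p) < \<rho>"
  proof (rule ccontr)
    assume neg: "\<not> (\<forall>t\<in>{0..T}. norm (x t - p) < \<rho>)"
    define U where "U = {t \<in> {0..T}. \<rho> \<le> norm (x t - p)}"
    have Une: "U \<noteq> {}" using neg unfolding U_def by force
    have Ucl: "closed U" unfolding U_def
      by (intro continuous_on_closed_Collect_le nc continuous_on_const) auto
    have Ubd: "bdd_below U" unfolding U_def by (auto intro: bdd_belowI[of _ 0])
    define t1 where "t1 = Inf U"
    have t1U: "t1 \<in> U" unfolding t1_def using Une Ucl Ubd by (intro closed_contains_Inf)
    have t1min: "\<And>t. t \<in> U \<Longrightarrow> t1 \<le> t" unfolding t1_def using Ubd by (simp add: cInf_lower)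
    have t1pos: "0 \<le> t1" "t1 \<le> T" using t1U unfolding U_def by auto
    have inb: "norm (x t - p) < r" if "0 \<le> t" "t < t1" for t
    proof -
      have "t \<notin> U" using t1min that by force
      then show ?thesis using that t1pos rho unfolding U_def by auto
    qed
    have "V (x t1) \<le> V (x 0)" using mono[OF t1pos inb] by blast
    also have "\<dots> \<le> \<beta> * (norm (x 0 - p))\<^sup>2" by (rule Vhi)
    also have "\<dots> < \<alpha> * \<rho>\<^sup>2" by (rule b)
    also have "\<dots> \<le> \<alpha> * (norm (x t1 - p))\<^sup>2"
      using t1U rho al unfolding U_def by (auto intro!: mult_left_mono power_mono)
    also have "\<dots> \<le> V (x t1)" by (rule Vlo)
    finally show False by simp
  qed
  show ?thesis
  proof
    fix t assume t: "t \<in> {0..T}"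
    have "V (x t) \<le> V (x 0)"
    proof (rule mono)
      show "0 \<le> t" "t \<le> T" using t by auto
      fix t' assume "0 \<le> t'" "t' < t"
      then have "norm (x t' - p) < \<rho>" using allin t by auto
      then show "norm (x t' - p) < r" using rho by linarith
    qed
    then show "norm (x t - p) < \<rho> \<and> V (x t) \<le> V (x 0)" using allin t by auto
  qed
qed

lemma exp_neg_lim:
  fixes c :: real assumes "c > 0"
  shows "((\<lambda>t. exp (- c * t)) \<longlongrightarrow> 0) at_top"
proof -
  have "LIM t at_top. (- c) * t :> at_bot"
    by (rule filterlim_tendsto_neg_mult_at_bot[OF tendsto_const]) (use assms in \<open>auto intro: filterlim_ident\<close>)
  then show ?thesis by (rule filterlim_compose[OF exp_at_bot])
qed

lemma lyap:
  fixes f :: "'a::real_normed_vector \<Rightarrow> 'a" and V :: "'a \<Rightarrow> real"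
  assumes fp: "f p = 0"
    and Vd: "\<And>y. (V has_derivative G y) (at y)"
    and Vlo: "\<And>y. \<alpha> * (norm (y - p))\<^sup>2 \<le> V y"
    and Vhi: "\<And>y. V y \<le> \<beta> * (norm (y - p))\<^sup>2"
    and al: "\<alpha> > 0" and be: "\<beta> > 0" and r: "r > 0" and c: "c > 0"
    and dec: "\<And>y. norm (y - p) < r \<Longrightarrow> G y (f y) \<le> - c * V y"
  shows "loc_asymp_stable f p"
proof -
  have Vnn: "\<And>y. 0 \<le> V y" using Vlo al by (meson order_trans zero_le_mult_iff zero_le_power2 less_imp_le)
  have dec0: "G y (f y) \<le> 0" if "norm (y - p) < r" for y
  proof -
    have "0 \<le> c * V y" using Vnn[of y] c by simp
    then show ?thesis using dec[OF that] by linarith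
  qed
  define k where "k = \<alpha> / (\<alpha> + \<beta>)"
  have k: "0 < k" "k \<le> 1" "\<beta> * k \<le> \<alpha>" using al be unfolding k_def by (auto simp: field_simps)
  have key: "\<forall>t\<in>{0..T}. norm (x t - p) < \<rho> \<and> V (x t) \<le> V (x 0)"
    if rho: "0 < \<rho>" "\<rho> \<le> r" and sol: "solution_on f T x" and T: "0 \<le> T"
      and n0: "norm (x 0 - p) < \<rho> * k" for \<rho> T x
  proof (rule stay[OF Vd Vlo Vhi al rho dec0 sol T])
    have nn: "0 \<le> norm (x 0 - p)" by simp
    show "norm (x 0 - p) < \<rho>" using n0 k rho by (smt (verit) mult_left_le)
    have "\<beta> * (norm (x 0 - p))\<^sup>2 < \<beta> * (\<rho> * k)\<^sup>2"
      using n0 nn be by (intro mult_strict_left_mono power_strict_mono) auto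
    also have "\<dots> = \<rho>\<^sup>2 * (k * (\<beta> * k))" by (simp add: power2_eq_square)
    also have "\<dots> \<le> \<rho>\<^sup>2 * (1 * \<alpha>)"
      using k al be by (intro mult_left_mono mult_mono) auto
    finally show "\<beta> * (norm (x 0 - p))\<^sup>2 < \<alpha> * \<rho>\<^sup>2" by (simp add: mult.commute)
  qed
  have stab: "\<forall>\<epsilon>>0. \<exists>\<delta>>0. \<forall>x T. 0 \<le> T \<longrightarrow> solution_on f T x \<longrightarrow> dist (x 0) p < \<delta> \<longrightarrow>
          (\<forall>t\<in>{0..T}. dist (x t) p < \<epsilon>)"
  proof (intro allI impI)
    fix \<epsilon> :: real assume e: "\<epsilon> > 0"
    define \<rho> where "\<rho> = min \<epsilon> r"
    have rho: "0 < \<rho>" "\<rho> \<le> r" "\<rho> \<le> \<epsilon>" using e r unfolding \<rho>_def by auto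
    show "\<exists>\<delta>>0. \<forall>x T. 0 \<le> T \<longrightarrow> solution_on f T x \<longrightarrow> dist (x 0) p < \<delta> \<longrightarrow>
          (\<forall>t\<in>{0..T}. dist (x t) p < \<epsilon>)"
    proof (intro exI[of _ "\<rho> * k"] conjI allI impI ballI)
      show "0 < \<rho> * k" using rho k by simp
      fix x T t assume T: "0 \<le> T" and sol: "solution_on f T x" and d: "dist (x 0) p < \<rho> * k"
        and t: "t \<in> {0..T}"
      have "norm (x t - p) < \<rho>" using key[OF rho(1,2) sol T] d t by (auto simp: dist_norm)
      then show "dist (x t) p < \<epsilon>" using rho by (simp add: dist_norm)
    qed
  qed
  have attr: "\<exists>\<eta>>0. \<forall>x. global_solution f x \<longrightarrow> dist (x 0) p < \<eta> \<longrightarrow> (x \<longlongrightarrow> p) at_top"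
  proof (intro exI[of _ "r * k"] conjI allI impI)
    show "0 < r * k" using r k by simp
    fix x assume gs: "global_solution f x" and d: "dist (x 0) p < r * k"
    have solT: "solution_on f T x" if "0 \<le> T" for T
      unfolding solution_on_def
    proof
      fix t assume t: "t \<in> {0..T}"
      then have "(x has_vector_derivative f (x t)) (at t within {0..})"
        using gs unfolding global_solution_def by auto
      then show "(x has_vector_derivative f (x t)) (at t within {0..T})"
        by (rule has_vector_derivative_within_subset) auto
    qed
    have inr: "norm (x t - p) < r" if "0 \<le> t" for t
      using key[OF r order_refl solT[OF that] that] d that by (auto simp: dist_norm)
    have gd: "((\<lambda>t. V (x t)) has_real_derivative G (x t) (f (x t))) (at t within {0..})" if "0 \<le> t" for t
      using gs that unfolding global_solution_def by (intro sol_deriv_V[OF Vd]) auto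
    define h where "h t = V (x t) * exp (c * t)" for t
    have hd: "(h has_real_derivative (G (x t) (f (x t)) + c * V (x t)) * exp (c * t)) (at t within {0..})"
      if "0 \<le> t" for t
      unfolding h_def using gd[OF that]
      by (auto intro!: derivative_eq_intros simp: algebra_simps)
    have bound: "V (x t) \<le> V (x 0) * exp (- c * t)" if t: "0 \<le> t" for t
    proof -
      have "h t \<le> h 0"
      proof (rule DERIV_nonpos_imp_decreasing_open[OF t])
        fix s assume s: "0 < s" "s < t"
        have "at s within {0..} = at s" using s by (intro at_within_interior) auto
        then have "(h has_real_derivative (G (x s) (f (x s)) + c * V (x s)) * exp (c * s)) (at s)"
          using hd[of s] s by simp
        moreover have "(G (x s) (f (x s)) + c * V (x s)) * exp (c * s) \<le> 0"
          using dec[OF inr[of s]] s by (intro mult_nonpos_nonneg) auto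
        ultimately show "\<exists>y. (h has_real_derivative y) (at s) \<and> y \<le> 0" by blast
      next
        have "continuous_on {0..} h"
          using hd by (metis continuous_on_eq_continuous_within DERIV_continuous atLeast_iff)
        then show "continuous_on {0..t} h" by (elim continuous_on_subset) auto
      qed
      then have "V (x t) * exp (c * t) \<le> V (x 0)" by (simp add: h_def)
      then have "V (x t) * exp (c * t) * exp (- c * t) \<le> V (x 0) * exp (- c * t)"
        by (intro mult_right_mono) auto
      then show ?thesis by (simp add: mult.assoc flip: exp_add)
    qed
    have "((\<lambda>t. x t - p) \<longlongrightarrow> 0) at_top"
    proof (rule Lim_null_comparison)
      show "\<forall>\<^sub>F t in at_top. norm (x t - p) \<le> sqrt (V (x 0) / \<alpha> * exp (- c * t))"
        unfolding eventually_at_top_linorder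
      proof (intro exI[of _ 0] allI impI)
        fix t :: real assume t: "0 \<le> t"
        have "\<alpha> * (norm (x t - p))\<^sup>2 \<le> V (x 0) * exp (- c * t)"
          using Vlo[of "x t"] bound[OF t] by linarith
        then have "(norm (x t - p))\<^sup>2 \<le> V (x 0) / \<alpha> * exp (- c * t)"
          using al by (simp add: field_simps)
        then show "norm (x t - p) \<le> sqrt (V (x 0) / \<alpha> * exp (- c * t))"
          by (simp add: real_le_rsqrt)
      qed
      have "((\<lambda>t. V (x 0) / \<alpha> * exp (- c * t)) \<longlongrightarrow> V (x 0) / \<alpha> * 0) at_top"
        by (intro tendsto_mult tendsto_const exp_neg_lim c)
      then show "((\<lambda>t. sqrt (V (x 0) / \<alpha> * exp (- c * t))) \<longlongrightarrow> 0) at_top"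
        using tendsto_real_sqrt by fastforce
    qed
    then show "(x \<longlongrightarrow> p) at_top" by (simp add: Lim_null[symmetric])
  qed
  show ?thesis unfolding loc_asymp_stable_def is_equilibrium_def using fp stab attr by blast
qed




definition p1 :: "state \<Rightarrow> real" where "p1 z = fst z"
definition p2 :: "state \<Rightarrow> real" where "p2 z = fst (snd z)"
definition p3 :: "state \<Rightarrow> real" where "p3 z = fst (snd (snd z))"
definition p4 :: "state \<Rightarrow> real" where "p4 z = snd (snd (snd z))"

lemma p_simps[simp]: "p1 (a,b,c,d) = a" "p2 (a,b,c,d) = b" "p3 (a,b,c,d) = c" "p4 (a,b,c,d) = d"
  by (simp_all add: p1_def p2_def p3_def p4_def)

lemma p_add[simp]: "p1 (x + y) = p1 x + p1 y" "p2 (x + y) = p2 x + p2 y" "p3 (x + y) = p3 x + p3 y" "p4 (x + y) = p4 x + p4 y"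
  by (simp_all add: p1_def p2_def p3_def p4_def)
lemma p_diff[simp]: "p1 (x - y) = p1 x - p1 y" "p2 (x - y) = p2 x - p2 y" "p3 (x - y) = p3 x - p3 y" "p4 (x - y) = p4 x - p4 y"
  by (simp_all add: p1_def p2_def p3_def p4_def)

lemma normsq: "(norm (z::state))\<^sup>2 = (p1 z)\<^sup>2 + (p2 z)\<^sup>2 + (p3 z)\<^sup>2 + (p4 z)\<^sup>2"
  by (cases z) (simp add: norm_Pair)

lemma p_le_norm: "\<bar>p1 z\<bar> \<le> norm z" "\<bar>p2 z\<bar> \<le> norm z" "\<bar>p3 z\<bar> \<le> norm z" "\<bar>p4 z\<bar> \<le> norm z"
proof -
  have n: "0 \<le> norm z" by simp
  have e: "\<bar>a\<bar> \<le> norm z" if "a\<^sup>2 \<le> (norm z)\<^sup>2" for a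
    using that n by (metis abs_le_square_iff abs_norm_cancel)
  show "\<bar>p1 z\<bar> \<le> norm z" "\<bar>p2 z\<bar> \<le> norm z" "\<bar>p3 z\<bar> \<le> norm z" "\<bar>p4 z\<bar> \<le> norm z"
    by (intro e; simp add: normsq)+
qed



lemma lin_p: "bounded_linear p1" "bounded_linear p2" "bounded_linear p3" "bounded_linear p4"
  unfolding p1_def p2_def p3_def p4_def
  by (intro bounded_linear_compose[OF bounded_linear_fst] bounded_linear_compose[OF bounded_linear_snd] bounded_linear_fst bounded_linear_snd bounded_linear_ident)+

lemma sq_deriv:
  fixes P :: "state \<Rightarrow> real"
  assumes P: "bounded_linear P"
  shows "((\<lambda>z. w * (P (z - p))\<^sup>2) has_derivative (\<lambda>h. 2 * (w * P (z - p) * P h))) (at z)"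
proof -
  have "((\<lambda>z. P z - P p) has_derivative (\<lambda>h. P h - 0)) (at z)"
    by (rule has_derivative_diff[OF bounded_linear.has_derivative[OF P has_derivative_ident] has_derivative_const])
  then have "((\<lambda>z. P (z - p)) has_derivative P) (at z)"
    using P by (simp add: linear_simps)
  then show ?thesis
    by (auto intro!: derivative_eq_intros simp: algebra_simps power2_eq_square)
qed
lemma quad_stable:
  fixes f D :: "state \<Rightarrow> state"
  assumes fp: "f p = 0" and fd: "(f has_derivative D) (at p)"
    and w: "w1 > 0" "w2 > 0" "w3 > 0" "w4 > 0" and c0: "c0 > 0"
    and Q: "\<And>y. w1 * p1 y * p1 (D y) + w2 * p2 y * p2 (D y) + w3 * p3 y * p3 (D y)
                + w4 * p4 y * p4 (D y) \<le> - c0 * (norm y)\<^sup>2"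
  shows "loc_asymp_stable f p"
proof -
  define V where "V z = w1 * (p1 (z - p))\<^sup>2 + w2 * (p2 (z - p))\<^sup>2 + w3 * (p3 (z - p))\<^sup>2 + w4 * (p4 (z - p))\<^sup>2" for z
  define G where "G z h = 2 * (w1 * p1 (z - p) * p1 h) + 2 * (w2 * p2 (z - p) * p2 h) + 2 * (w3 * p3 (z - p) * p3 h) + 2 * (w4 * p4 (z - p) * p4 h)" for z h
  define W where "W = w1 + w2 + w3 + w4"
  define al where "al = min (min w1 w2) (min w3 w4)"
  have W: "W > 0" using w unfolding W_def by simp
  have al: "al > 0" using w unfolding al_def by simp
  have Vd: "(V has_derivative G z) (at z)" for z
    unfolding V_def G_def
    by (intro has_derivative_add sq_deriv lin_p)
  have Vlo: "al * (norm (z - p))\<^sup>2 \<le> V z" for z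
  proof -
    have "al * (norm (z - p))\<^sup>2 = al * (p1 (z - p))\<^sup>2 + al * (p2 (z - p))\<^sup>2 + al * (p3 (z - p))\<^sup>2 + al * (p4 (z - p))\<^sup>2"
      by (simp only: normsq distrib_left)
    also have "\<dots> \<le> V z" unfolding V_def al_def
      by (intro add_mono mult_right_mono) auto
    finally show ?thesis .
  qed
  have Vhi: "V z \<le> W * (norm (z - p))\<^sup>2" for z
  proof -
    have "V z \<le> w1 * (norm (z - p))\<^sup>2 + w2 * (norm (z - p))\<^sup>2 + w3 * (norm (z - p))\<^sup>2 + w4 * (norm (z - p))\<^sup>2"
      unfolding V_def using w
      by (intro add_mono mult_left_mono; simp add: normsq)
    then show ?thesis by (simp add: W_def algebra_simps)
  qed
  define eps where "eps = c0 / (4 * W)"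
  have eps: "eps > 0" using c0 W unfolding eps_def by simp
  obtain d where d: "d > 0" and dR: "\<And>y. norm (y - p) < d \<Longrightarrow> norm (f y - f p - D (y - p)) \<le> eps * norm (y - p)"
    using fd eps unfolding has_derivative_at_alt by blast
  have dec: "G y (f y) \<le> - (c0 / W) * V y" if y: "norm (y - p) < d" for y
  proof -
    define u where "u = y - p"
    define R where "R = f y - D u"
    have Rb: "norm R \<le> eps * norm u" using dR[OF y] fp unfolding R_def u_def by simp
    have fy: "f y = D u + R" unfolding R_def by simp
    have Gs: "G y (f y) = 2 * (w1 * p1 u * p1 (D u) + w2 * p2 u * p2 (D u) + w3 * p3 u * p3 (D u) + w4 * p4 u * p4 (D u))
       + 2 * (w1 * p1 u * p1 R + w2 * p2 u * p2 R + w3 * p3 u * p3 R + w4 * p4 u * p4 R)"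
      unfolding G_def fy u_def by (simp add: algebra_simps)
    have b1: "\<bar>wi * pu * pR\<bar> \<le> wi * (norm u * norm R)" if "wi > 0" "\<bar>pu\<bar> \<le> norm u" "\<bar>pR\<bar> \<le> norm R" for wi pu pR :: real
      using that by (auto simp: abs_mult intro!: mult_left_mono mult_mono)
    have "\<bar>w1 * p1 u * p1 R + w2 * p2 u * p2 R + w3 * p3 u * p3 R + w4 * p4 u * p4 R\<bar>
       \<le> w1 * (norm u * norm R) + w2 * (norm u * norm R) + w3 * (norm u * norm R) + w4 * (norm u * norm R)"
      using b1[OF w(1) p_le_norm(1) p_le_norm(1)] b1[OF w(2) p_le_norm(2) p_le_norm(2)]
        b1[OF w(3) p_le_norm(3) p_le_norm(3)] b1[OF w(4) p_le_norm(4) p_le_norm(4)]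
      by linarith
    also have "\<dots> = W * (norm u * norm R)" by (simp add: W_def algebra_simps)
    also have "\<dots> \<le> W * (norm u * (eps * norm u))"
      using W Rb by (intro mult_left_mono) auto
    also have "\<dots> = c0 / 4 * (norm u)\<^sup>2" using W unfolding eps_def by (simp add: power2_eq_square field_simps)
    finally have rem: "\<bar>w1 * p1 u * p1 R + w2 * p2 u * p2 R + w3 * p3 u * p3 R + w4 * p4 u * p4 R\<bar> \<le> c0 / 4 * (norm u)\<^sup>2" .
    have nn: "0 \<le> c0 * (norm u)\<^sup>2" using c0 by simp
    have e4: "c0 / 4 * (norm u)\<^sup>2 = (c0 * (norm u)\<^sup>2) / 4" by simp
    have "G y (f y) \<le> - c0 * (norm u)\<^sup>2"
    proof -
      have ar: "g \<le> - X" if "g = 2 * a + 2 * b" "a \<le> - X" "\<bar>b\<bar> \<le> X / 4" "0 \<le> X" for g a b X :: real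
        using that by (auto simp: abs_le_iff)
      show ?thesis using ar[OF Gs Q[of u, unfolded mult_minus_left] rem[unfolded e4] nn] by simp
    qed
    also have "\<dots> \<le> - (c0 / W) * V y"
    proof -
      have "(c0 / W) * V y \<le> (c0 / W) * (W * (norm u)\<^sup>2)"
        using Vhi[of y] c0 W unfolding u_def by (intro mult_left_mono) auto
      also have "\<dots> = c0 * (norm u)\<^sup>2" using W by simp
      finally show ?thesis by simp
    qed
    finally show ?thesis .
  qed
  show ?thesis
    by (rule lyap[OF fp Vd Vlo Vhi al W d _ dec]) (use c0 W in auto)
qed




lemma lyap_step:
  fixes c m B S q L zn :: real
  assumes c: "c > 0" and m: "m < 0" and B: "B \<ge> 0" and S: "S \<ge> 0"
    and q: "q \<le> - c * S" and L: "L\<^sup>2 \<le> B * S"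
  shows "q + (c * (- m) / (B + 1)) * zn * (L + m * zn)
         \<le> - (min (c / 2) ((c * (- m) / (B + 1)) * (- m) / 2)) * (S + zn\<^sup>2)"
proof -
  define k where "k = - m"
  define w where "w = c * k / (B + 1)"
  have k: "k > 0" using m unfolding k_def by simp
  have w: "w > 0" using c k B unfolding w_def by simp
  have am: "2 * zn * L \<le> k * zn\<^sup>2 + L\<^sup>2 / k"
  proof -
    have "0 \<le> (k * zn - L)\<^sup>2" by simp
    then have "2 * k * zn * L \<le> k * (k * zn\<^sup>2) + L\<^sup>2" by (simp add: power2_eq_square algebra_simps)
    then have "k * (2 * zn * L) \<le> k * (k * zn\<^sup>2 + L\<^sup>2 / k)" using k by (simp add: algebra_simps)
    then show ?thesis using k by (simp add: mult_le_cancel_left)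
  qed
  have L2: "L\<^sup>2 / k \<le> B * S / k" using L k by (simp add: divide_right_mono)
  have wB: "w * (B * S / k) \<le> c * S"
  proof -
    have "w * (B * S / k) = c * S * (B / (B + 1))" using k B unfolding w_def by (simp add: field_simps)
    also have "\<dots> \<le> c * S * 1" using c S B by (intro mult_left_mono) auto
    finally show ?thesis by simp
  qed
  have "w * zn * L \<le> w / 2 * (k * zn\<^sup>2 + L\<^sup>2 / k)"
  proof -
    have "w * (2 * zn * L) \<le> w * (k * zn\<^sup>2 + L\<^sup>2 / k)" using am w by (intro mult_left_mono) auto
    then have "(w * (2 * zn * L)) / 2 \<le> (w * (k * zn\<^sup>2 + L\<^sup>2 / k)) / 2" by (rule divide_right_mono) simp
    moreover have "w * zn * L = (w * (2 * zn * L)) / 2" by simp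
    moreover have "w / 2 * (k * zn\<^sup>2 + L\<^sup>2 / k) = (w * (k * zn\<^sup>2 + L\<^sup>2 / k)) / 2" by simp
    ultimately show ?thesis by (simp only:)
  qed
  also have "\<dots> \<le> w / 2 * (k * zn\<^sup>2 + B * S / k)" using w L2 by (intro mult_left_mono) auto
  finally have wzl: "w * zn * L \<le> w * k / 2 * zn\<^sup>2 + (w * (B * S / k)) / 2" by (simp add: algebra_simps)
  have eq: "q + w * zn * (L + m * zn) = q + w * zn * L - w * k * zn\<^sup>2"
    unfolding k_def by (simp add: algebra_simps power2_eq_square)
  have main: "q + w * zn * (L + m * zn) \<le> - (c / 2) * S - (w * k / 2) * zn\<^sup>2"
    using eq wzl wB q by (simp add: algebra_simps)
  define mu where "mu = min (c / 2) (w * k / 2)"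
  have "- (c / 2) * S - (w * k / 2) * zn\<^sup>2 \<le> - mu * S - mu * zn\<^sup>2"
  proof -
    have "mu * S \<le> (c / 2) * S" unfolding mu_def using S by (intro mult_right_mono) auto
    moreover have "mu * zn\<^sup>2 \<le> (w * k / 2) * zn\<^sup>2" unfolding mu_def by (intro mult_right_mono) auto
    ultimately show ?thesis by simp
  qed
  also have "\<dots> = - mu * (S + zn\<^sup>2)" by (simp add: algebra_simps)
  finally show ?thesis using main unfolding mu_def w_def k_def by simp
qed




lemma cs2: "(b1 * z1 + b2 * z2)\<^sup>2 \<le> (b1\<^sup>2 + b2\<^sup>2) * (z1\<^sup>2 + z2\<^sup>2)" for b1 b2 z1 z2 :: real
proof -
  have "(b1\<^sup>2 + b2\<^sup>2) * (z1\<^sup>2 + z2\<^sup>2) - (b1 * z1 + b2 * z2)\<^sup>2 = (b1 * z2 - b2 * z1)\<^sup>2"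
    by (simp add: power2_eq_square algebra_simps)
  then show ?thesis by (smt (verit) zero_le_power2)
qed

lemma cs3: "(b1 * z1 + b2 * z2 + b3 * z3)\<^sup>2 \<le> (b1\<^sup>2 + b2\<^sup>2 + b3\<^sup>2) * (z1\<^sup>2 + z2\<^sup>2 + z3\<^sup>2)" for b1 b2 b3 z1 z2 z3 :: real
proof -
  have "(b1\<^sup>2 + b2\<^sup>2 + b3\<^sup>2) * (z1\<^sup>2 + z2\<^sup>2 + z3\<^sup>2) - (b1 * z1 + b2 * z2 + b3 * z3)\<^sup>2
     = (b1 * z2 - b2 * z1)\<^sup>2 + (b1 * z3 - b3 * z1)\<^sup>2 + (b2 * z3 - b3 * z2)\<^sup>2"
    by (simp add: power2_eq_square algebra_simps)
  moreover have "0 \<le> (b1 * z2 - b2 * z1)\<^sup>2 + (b1 * z3 - b3 * z1)\<^sup>2 + (b2 * z3 - b3 * z2)\<^sup>2" by simp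
  ultimately show ?thesis by linarith
qed

lemma tri4:
  fixes m1 m2 m3 m4 b21 b31 b32 b41 b42 b43 :: real
  assumes m: "m1 < 0" "m2 < 0" "m3 < 0" "m4 < 0"
  shows "\<exists>w1 w2 w3 w4 c. w1 > 0 \<and> w2 > 0 \<and> w3 > 0 \<and> w4 > 0 \<and> c > 0 \<and>
    (\<forall>z1 z2 z3 z4. w1 * z1 * (m1 * z1) + w2 * z2 * (b21 * z1 + m2 * z2)
       + w3 * z3 * (b31 * z1 + b32 * z2 + m3 * z3)
       + w4 * z4 * (b41 * z1 + b42 * z2 + b43 * z3 + m4 * z4) \<le> - c * (z1\<^sup>2 + z2\<^sup>2 + z3\<^sup>2 + z4\<^sup>2))"
proof -
  define c1 where "c1 = - m1"
  have c1: "c1 > 0" using m unfolding c1_def by simp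
  define B2 where "B2 = b21\<^sup>2"
  define w2 where "w2 = c1 * (- m2) / (B2 + 1)"
  define c2 where "c2 = min (c1 / 2) (w2 * (- m2) / 2)"
  define B3 where "B3 = b31\<^sup>2 + b32\<^sup>2"
  define w3 where "w3 = c2 * (- m3) / (B3 + 1)"
  define c3 where "c3 = min (c2 / 2) (w3 * (- m3) / 2)"
  define B4 where "B4 = b41\<^sup>2 + b42\<^sup>2 + b43\<^sup>2"
  define w4 where "w4 = c3 * (- m4) / (B4 + 1)"
  define c4 where "c4 = min (c3 / 2) (w4 * (- m4) / 2)"
  have B: "B2 \<ge> 0" "B3 \<ge> 0" "B4 \<ge> 0" unfolding B2_def B3_def B4_def by simp_all
  have w2: "w2 > 0" unfolding w2_def using c1 m B by (intro divide_pos_pos mult_pos_pos) auto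
  have c2: "c2 > 0" unfolding c2_def using c1 w2 m by (simp add: mult_pos_neg)
  have w3: "w3 > 0" unfolding w3_def using c2 m B by (intro divide_pos_pos mult_pos_pos) auto
  have c3: "c3 > 0" unfolding c3_def using c2 w3 m by (simp add: mult_pos_neg)
  have w4: "w4 > 0" unfolding w4_def using c3 m B by (intro divide_pos_pos mult_pos_pos) auto
  have c4: "c4 > 0" unfolding c4_def using c3 w4 m by (simp add: mult_pos_neg)
  have all: "\<forall>z1 z2 z3 z4. 1 * z1 * (m1 * z1) + w2 * z2 * (b21 * z1 + m2 * z2)
       + w3 * z3 * (b31 * z1 + b32 * z2 + m3 * z3)
       + w4 * z4 * (b41 * z1 + b42 * z2 + b43 * z3 + m4 * z4) \<le> - c4 * (z1\<^sup>2 + z2\<^sup>2 + z3\<^sup>2 + z4\<^sup>2)"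
  proof (intro allI)
    fix z1 z2 z3 z4 :: real
    have s1: "1 * z1 * (m1 * z1) \<le> - c1 * z1\<^sup>2" unfolding c1_def by (simp add: power2_eq_square)
    have s2: "1 * z1 * (m1 * z1) + w2 * z2 * (b21 * z1 + m2 * z2) \<le> - c2 * (z1\<^sup>2 + z2\<^sup>2)"
      unfolding w2_def c2_def
    proof (rule lyap_step[OF c1 m(2) B(1) _ s1])
      show "0 \<le> z1\<^sup>2" by simp
      show "(b21 * z1)\<^sup>2 \<le> B2 * z1\<^sup>2" unfolding B2_def by (simp add: power_mult_distrib)
    qed
    have s3: "1 * z1 * (m1 * z1) + w2 * z2 * (b21 * z1 + m2 * z2) + w3 * z3 * ((b31 * z1 + b32 * z2) + m3 * z3)
        \<le> - c3 * ((z1\<^sup>2 + z2\<^sup>2) + z3\<^sup>2)"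
      unfolding w3_def c3_def
    proof (rule lyap_step[OF c2 m(3) B(2) _ s2])
      show "0 \<le> z1\<^sup>2 + z2\<^sup>2" by simp
      show "(b31 * z1 + b32 * z2)\<^sup>2 \<le> B3 * (z1\<^sup>2 + z2\<^sup>2)" unfolding B3_def by (rule cs2)
    qed
    have s4: "1 * z1 * (m1 * z1) + w2 * z2 * (b21 * z1 + m2 * z2) + w3 * z3 * ((b31 * z1 + b32 * z2) + m3 * z3)
       + w4 * z4 * ((b41 * z1 + b42 * z2 + b43 * z3) + m4 * z4) \<le> - c4 * ((z1\<^sup>2 + z2\<^sup>2 + z3\<^sup>2) + z4\<^sup>2)"
      unfolding w4_def c4_def
    proof (rule lyap_step[OF c3 m(4) B(3) _ s3])
      show "0 \<le> z1\<^sup>2 + z2\<^sup>2 + z3\<^sup>2" by simp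
      show "(b41 * z1 + b42 * z2 + b43 * z3)\<^sup>2 \<le> B4 * (z1\<^sup>2 + z2\<^sup>2 + z3\<^sup>2)" unfolding B4_def by (rule cs3)
    qed
    then show "1 * z1 * (m1 * z1) + w2 * z2 * (b21 * z1 + m2 * z2)
       + w3 * z3 * (b31 * z1 + b32 * z2 + m3 * z3)
       + w4 * z4 * (b41 * z1 + b42 * z2 + b43 * z3 + m4 * z4) \<le> - c4 * (z1\<^sup>2 + z2\<^sup>2 + z3\<^sup>2 + z4\<^sup>2)"
      by simp
  qed
  show ?thesis
    apply (rule exI[of _ 1], rule exI[of _ w2], rule exI[of _ w3], rule exI[of _ w4], rule exI[of _ c4])
    using w2 w3 w4 c4 all by simp
qed




lemma smooth1_diff: assumes "smooth1 f"
  shows "f differentiable at x" "deriv f differentiable at x"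
proof -
  have "(deriv ^^ 0) f differentiable at x" "(deriv ^^ 1) f differentiable at x"
    using assms unfolding smooth1_def by blast+
  then show "f differentiable at x" "deriv f differentiable at x" by simp_all
qed

lemma smooth1_D: assumes "smooth1 f"
  shows "(f has_real_derivative deriv f x) (at x)" "(deriv f has_real_derivative deriv (deriv f) x) (at x)"
  using smooth1_diff[OF assms] DERIV_deriv_iff_real_differentiable by blast+

lemma smooth2_diff: assumes "smooth2 g"
  shows "(\<lambda>(x, y). g x y) differentiable at q" "(\<lambda>(x, y). pd1 g x y) differentiable at q"
     "(\<lambda>(x, y). pd2 g x y) differentiable at q"
proof -
  have "(\<lambda>(x::real, y::real). iter_pd ds g x y) differentiable (at q)" for ds
    using assms unfolding smooth2_def by blast
  from this[of "[]"] this[of "[True]"] this[of "[False]"]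
  show "(\<lambda>(x, y). g x y) differentiable at q" "(\<lambda>(x, y). pd1 g x y) differentiable at q"
     "(\<lambda>(x, y). pd2 g x y) differentiable at q"
    by (simp_all add: iter_pd_def)
qed

lemma pd_D: assumes "(\<lambda>(x, y). g x y) differentiable at (x0, y0)"
  shows "((\<lambda>s. g s y0) has_real_derivative pd1 g x0 y0) (at x0)"
    "((\<lambda>s. g x0 s) has_real_derivative pd2 g x0 y0) (at y0)"
proof -
  have "(\<lambda>s. (\<lambda>(x, y). g x y) (s, y0)) differentiable at x0"
    by (rule differentiable_compose[of "\<lambda>(x, y). g x y"]) (use assms in \<open>auto intro!: derivative_intros\<close>)
  then show "((\<lambda>s. g s y0) has_real_derivative pd1 g x0 y0) (at x0)"
    unfolding pd1_def by (simp add: DERIV_deriv_iff_real_differentiable)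
  have "(\<lambda>s. (\<lambda>(x, y). g x y) (x0, s)) differentiable at y0"
    by (rule differentiable_compose[of "\<lambda>(x, y). g x y"]) (use assms in \<open>auto intro!: derivative_intros\<close>)
  then show "((\<lambda>s. g x0 s) has_real_derivative pd2 g x0 y0) (at y0)"
    unfolding pd2_def by (simp add: DERIV_deriv_iff_real_differentiable)
qed

lemma dir_deriv:
  fixes F D :: "state \<Rightarrow> state" and P :: "state \<Rightarrow> real"
  assumes FD: "(F has_derivative D) (at p)" and P: "bounded_linear P"
  shows "((\<lambda>t. P (F (p + t *\<^sub>R e))) has_real_derivative P (D e)) (at 0)"
proof -
  have l: "((\<lambda>t::real. p + t *\<^sub>R e) has_derivative (\<lambda>t. t *\<^sub>R e)) (at 0)"
    by (auto intro!: derivative_eq_intros)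
  have "((\<lambda>t. F (p + t *\<^sub>R e)) has_derivative (\<lambda>t. D (t *\<^sub>R e))) (at 0)"
    by (rule has_derivative_compose[OF l]) (simp add: FD)
  then have "((\<lambda>t. P (F (p + t *\<^sub>R e))) has_derivative (\<lambda>t. P (D (t *\<^sub>R e)))) (at 0)"
    by (rule bounded_linear.has_derivative[OF P])
  moreover have "(\<lambda>t. P (D (t *\<^sub>R e))) = (*) (P (D e))"
    using has_derivative_linear[OF FD] P
    by (auto simp: fun_eq_iff linear_scale[OF has_derivative_linear[OF FD]] linear_scale[OF bounded_linear.linear[OF P]] real_scaleR_def)
  ultimately show ?thesis by (simp add: has_field_derivative_def)
qed

lemma D_expand:
  fixes D :: "state \<Rightarrow> state" and P :: "state \<Rightarrow> real"
  assumes D: "linear D" and P: "bounded_linear P"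
  shows "P (D y) = p1 y * P (D (1,0,0,0)) + p2 y * P (D (0,1,0,0)) + p3 y * P (D (0,0,1,0)) + p4 y * P (D (0,0,0,1))"
proof -
  have y: "y = p1 y *\<^sub>R (1,0,0,0) + p2 y *\<^sub>R (0,1,0,0) + p3 y *\<^sub>R (0,0,1,0) + p4 y *\<^sub>R (0,0,0,1)"
    by (cases y) simp
  have "P (D y) = P (D (p1 y *\<^sub>R (1,0,0,0) + p2 y *\<^sub>R (0,1,0,0) + p3 y *\<^sub>R (0,0,1,0) + p4 y *\<^sub>R (0,0,0,1)))"
    using y by metis
  also have "\<dots> = p1 y * P (D (1,0,0,0)) + p2 y * P (D (0,1,0,0)) + p3 y * P (D (0,0,1,0)) + p4 y * P (D (0,0,0,1))"
    by (simp only: linear_add[OF D] linear_scale[OF D] linear_add[OF bounded_linear.linear[OF P]] linear_scale[OF bounded_linear.linear[OF P]] real_scaleR_def)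
  finally show ?thesis .
qed




lemma hp_eq: "hp_field r1 r2 h e d s1 s2 K1 K2 a = (\<lambda>z.
     (p1 z * (r1 * (1 - p1 z / K1 (p3 z)) - a (p3 z) (p4 z) * p2 z / (1 + h * a (p3 z) (p4 z) * p1 z)),
      p2 z * (e * a (p3 z) (p4 z) * p1 z / (1 + h * a (p3 z) (p4 z) * p1 z) - d + r2 * (1 - p2 z / K2 (p4 z))),
      s1\<^sup>2 * (r1 * p1 z * deriv K1 (p3 z) / (K1 (p3 z))\<^sup>2 - p2 z * pd1 a (p3 z) (p4 z) / (1 + h * a (p3 z) (p4 z) * p1 z)\<^sup>2),
      s2\<^sup>2 * (e * p1 z * pd2 a (p3 z) (p4 z) / (1 + h * a (p3 z) (p4 z) * p1 z)\<^sup>2 + r2 * p2 z * deriv K2 (p4 z) / (K2 (p4 z))\<^sup>2)))"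
  by (auto simp: hp_field_def fun_eq_iff p1_def p2_def p3_def p4_def split: prod.splits)

lemma dP: "p1 differentiable at q" "p2 differentiable at q" "p3 differentiable at q" "p4 differentiable at q"
  using lin_p by (auto intro: bounded_linear_imp_differentiable)

lemma dK: "f differentiable at (p3 q) \<Longrightarrow> (\<lambda>z. f (p3 z)) differentiable at q"
  "f differentiable at (p4 q) \<Longrightarrow> (\<lambda>z. f (p4 z)) differentiable at q"
  by (rule differentiable_compose[of f], assumption, rule dP)+

lemma dA: assumes "(\<lambda>(x, y). g x y) differentiable at (p3 q, p4 q)"
  shows "(\<lambda>z. g (p3 z) (p4 z)) differentiable at q"
proof -
  have "(\<lambda>z. (\<lambda>(x, y). g x y) ((\<lambda>z. (p3 z, p4 z)) z)) differentiable at q"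
    by (rule differentiable_compose[of "\<lambda>(x, y). g x y"]) (use assms dP in auto)
  then show ?thesis by simp
qed

lemma hp_diff:
  assumes K1s: "smooth1 K1" and K2s: "smooth1 K2" and as: "smooth2 a"
    and K1p: "\<And>u. K1 u > 0" and K2p: "\<And>u. K2 u > 0"
    and den: "1 + h * a (p3 q) (p4 q) * p1 q \<noteq> 0"
  shows "hp_field r1 r2 h e d s1 s2 K1 K2 a differentiable at q"
proof -
  note d1 = dK[OF smooth1_diff(1)[OF K1s]] dK[OF smooth1_diff(2)[OF K1s]]
     dK[OF smooth1_diff(1)[OF K2s]] dK[OF smooth1_diff(2)[OF K2s]]
  note d2 = dA[OF smooth2_diff(1)[OF as]] dA[OF smooth2_diff(2)[OF as]] dA[OF smooth2_diff(3)[OF as]]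
  have nz: "K1 (p3 q) \<noteq> 0" "K2 (p4 q) \<noteq> 0" using K1p[of "p3 q"] K2p[of "p4 q"] by auto
  show ?thesis unfolding hp_eq
    by (intro differentiable_Pair differentiable_mult differentiable_diff differentiable_add
        differentiable_divide differentiable_power differentiable_const d1 d2 dP den nz power_not_zero)
qed




lemma shiftD: assumes "(f has_real_derivative f') (at c)"
  shows "((\<lambda>t. f (c + t)) has_real_derivative f') (at 0)"
proof -
  have g: "((\<lambda>t. c + t) has_real_derivative 1) (at 0)" by (auto intro!: derivative_eq_intros)
  have "(f has_real_derivative f') (at ((\<lambda>t. c + t) 0))" using assms by simp
  from DERIV_chain2[OF this g] show ?thesis by simp
qed

lemma case_i:
  fixes K1 K2 :: "real \<Rightarrow> real" and a :: "real \<Rightarrow> real \<Rightarrow> real"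
  assumes K1s: "smooth1 K1" and K2s: "smooth1 K2" and as: "smooth2 a"
    and K1p: "\<And>u. K1 u > 0" and K2p: "\<And>u. K2 u > 0" and ap: "\<And>u v. a u v > 0"
    and pos: "r1 > 0" "r2 > 0" "h > 0" "e > 0" "s1 > 0" "s2 > 0"
    and K1d0: "deriv K1 u1s = 0" and a20: "pd2 a u1s u2s = 0"
    and cnd: "e * a u1s u2s * K1 u1s / (1 + h * a u1s u2s * K1 u1s) < d - r2"
    and K1dd: "deriv (deriv K1) u1s < 0" and add: "pd2 (pd2 a) u1s u2s < 0"
  shows "loc_asymp_stable (hp_field r1 r2 h e d s1 s2 K1 K2 a) (K1 u1s, 0, u1s, u2s)"
proof -
  define F where "F = hp_field r1 r2 h e d s1 s2 K1 K2 a"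
  define K where "K = K1 u1s"
  define A where "A = a u1s u2s"
  define p where "p = (K, 0::real, u1s, u2s)"
  have K: "K > 0" unfolding K_def using K1p by simp
  have A: "A > 0" unfolding A_def using ap by simp
  have den: "1 + h * A * K > 0" using K A pos by (simp add: add_pos_nonneg)
  have fp: "F p = 0" unfolding F_def p_def K_def by (simp add: hp_field_def K1d0 a20 zero_prod_def)
  have "F differentiable at p" unfolding F_def
    by (rule hp_diff[OF K1s K2s as K1p K2p]) (use den in \<open>simp add: p_def A_def K_def\<close>)
  then obtain D where FD: "(F has_derivative D) (at p)" unfolding differentiable_def by blast
  have E: "P (D v) = w" if "bounded_linear P" "\<And>t. P (F (p + t *\<^sub>R v)) = g t" "(g has_real_derivative w) (at 0)" for P v w g
  proof -
    have "(\<lambda>t. P (F (p + t *\<^sub>R v))) = g" using that(2) by auto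
    then show ?thesis using dir_deriv[OF FD that(1), of v] that(3) DERIV_unique by metis
  qed
  note K1D = shiftD[OF smooth1_D(1)[OF K1s]] shiftD[OF smooth1_D(2)[OF K1s]]
  note aD = shiftD[OF pd_D(2)[OF smooth2_diff(1)[OF as]]] shiftD[OF pd_D(2)[OF smooth2_diff(3)[OF as]]]
  have M11: "p1 (D (1,0,0,0)) = - r1"
  proof (rule E[OF lin_p(1)])
    show "p1 (F (p + t *\<^sub>R (1,0,0,0))) = (K + t) * (r1 * (1 - (K + t) / K))" for t
      by (simp add: F_def p_def hp_field_def K_def)
    show "((\<lambda>t. (K + t) * (r1 * (1 - (K + t) / K))) has_real_derivative - r1) (at 0)"
      using K by (auto intro!: derivative_eq_intros simp: field_simps)
  qed
  have M13: "p1 (D (0,0,1,0)) = 0"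
  proof -
    have dG: "((\<lambda>u. K * (r1 * (1 - K / K1 u))) has_real_derivative 0) (at u1s)"
      using K K1p[of u1s] by (auto intro!: derivative_eq_intros smooth1_D[OF K1s] simp: K1d0)
    show ?thesis
      by (rule E[OF lin_p(1) _ shiftD[OF dG]]) (simp add: F_def p_def hp_field_def K_def)
  qed
  have M14: "p1 (D (0,0,0,1)) = 0"
    by (rule E[OF lin_p(1), of _ "\<lambda>t. 0"]) (auto simp: F_def p_def hp_field_def K_def intro!: derivative_eq_intros)
  have M21: "p2 (D (1,0,0,0)) = 0"
    by (rule E[OF lin_p(2), of _ "\<lambda>t. 0"]) (auto simp: F_def p_def hp_field_def K_def intro!: derivative_eq_intros)
  have M23: "p2 (D (0,0,1,0)) = 0"
    by (rule E[OF lin_p(2), of _ "\<lambda>t. 0"]) (auto simp: F_def p_def hp_field_def K_def intro!: derivative_eq_intros)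
  have M24: "p2 (D (0,0,0,1)) = 0"
    by (rule E[OF lin_p(2), of _ "\<lambda>t. 0"]) (auto simp: F_def p_def hp_field_def K_def intro!: derivative_eq_intros)
  have M34: "p3 (D (0,0,0,1)) = 0"
    by (rule E[OF lin_p(3), of _ "\<lambda>t. 0"]) (auto simp: F_def p_def hp_field_def K_def K1d0 intro!: derivative_eq_intros)
  have M22: "p2 (D (0,1,0,0)) = e * A * K / (1 + h * A * K) - d + r2"
  proof (rule E[OF lin_p(2)])
    show "p2 (F (p + t *\<^sub>R (0,1,0,0))) = t * (e * A * K / (1 + h * A * K) - d + r2 * (1 - t / K2 u2s))" for t
      by (simp add: F_def p_def hp_field_def K_def A_def)
    show "((\<lambda>t. t * (e * A * K / (1 + h * A * K) - d + r2 * (1 - t / K2 u2s))) has_real_derivative e * A * K / (1 + h * A * K) - d + r2) (at 0)"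
      using K2p[of u2s] by (auto intro!: derivative_eq_intros)
  qed
  have M33: "p3 (D (0,0,1,0)) = s1\<^sup>2 * r1 * deriv (deriv K1) u1s / K"
  proof -
    have dG: "((\<lambda>u. s1\<^sup>2 * (r1 * K * deriv K1 u / (K1 u)\<^sup>2)) has_real_derivative s1\<^sup>2 * r1 * deriv (deriv K1) u1s / K) (at u1s)"
      using K K1p[of u1s] by (auto intro!: derivative_eq_intros smooth1_D[OF K1s] simp: K1d0 K_def power2_eq_square field_simps)
    show ?thesis
      by (rule E[OF lin_p(3) _ shiftD[OF dG]]) (simp add: F_def p_def hp_field_def K_def)
  qed
  have M44: "p4 (D (0,0,0,1)) = pd2 (pd2 a) u1s u2s * (e * K) * s2\<^sup>2 * (1 + h * A * K)\<^sup>2 / (1 + h * A * K) ^ 4"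
  proof -
    have dG: "((\<lambda>v. s2\<^sup>2 * (e * K * pd2 a u1s v / (1 + h * a u1s v * K)\<^sup>2)) has_real_derivative pd2 (pd2 a) u1s u2s * (e * K) * s2\<^sup>2 * (1 + h * A * K)\<^sup>2 / (1 + h * A * K) ^ 4) (at u2s)"
      using K den by (auto intro!: derivative_eq_intros pd_D(2)[OF smooth2_diff(1)[OF as]] pd_D(2)[OF smooth2_diff(3)[OF as]]
          simp: a20 simp flip: A_def)
    show ?thesis
      by (rule E[OF lin_p(4) _ shiftD[OF dG]]) (simp add: F_def p_def hp_field_def K_def)
  qed
  have lD: "linear D" using FD has_derivative_linear by blast
  define M12 where "M12 = p1 (D (0,1,0,0))"
  define M31 where "M31 = p3 (D (1,0,0,0))"
  define M32 where "M32 = p3 (D (0,1,0,0))"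
  define M41 where "M41 = p4 (D (1,0,0,0))"
  define M42 where "M42 = p4 (D (0,1,0,0))"
  define M43 where "M43 = p4 (D (0,0,1,0))"
  define m1 where "m1 = e * A * K / (1 + h * A * K) - d + r2"
  define m3 where "m3 = s1\<^sup>2 * r1 * deriv (deriv K1) u1s / K"
  define m4 where "m4 = pd2 (pd2 a) u1s u2s * (e * K) * s2\<^sup>2 * (1 + h * A * K)\<^sup>2 / (1 + h * A * K) ^ 4"
  have neg: "m1 < 0" "- r1 < 0" "m3 < 0" "m4 < 0"
  proof -
    show "m1 < 0" using cnd unfolding m1_def A_def K_def by simp
    show "- r1 < 0" using pos by simp
    have "s1\<^sup>2 * r1 * deriv (deriv K1) u1s < 0" using pos K1dd by (simp add: mult_pos_neg)
    then show "m3 < 0" unfolding m3_def using K by (simp add: divide_neg_pos)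
    have "pd2 (pd2 a) u1s u2s * (e * K) * s2\<^sup>2 * (1 + h * A * K)\<^sup>2 < 0"
      using pos K add den by (intro mult_neg_pos) auto
    then show "m4 < 0" unfolding m4_def using den by (simp add: divide_neg_pos)
  qed
  obtain w1 w2 w3 w4 c where w: "w1 > 0" "w2 > 0" "w3 > 0" "w4 > 0" "c > 0" and
    tri: "\<And>z1 z2 z3 z4. w1 * z1 * (m1 * z1) + w2 * z2 * (M12 * z1 + (- r1) * z2)
       + w3 * z3 * (M32 * z1 + M31 * z2 + m3 * z3)
       + w4 * z4 * (M42 * z1 + M41 * z2 + M43 * z3 + m4 * z4) \<le> - c * (z1\<^sup>2 + z2\<^sup>2 + z3\<^sup>2 + z4\<^sup>2)"
    using tri4[of m1 "- r1" m3 m4 M12 M32 M31 M42 M41 M43, OF neg] by blast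
  have Q: "w2 * p1 y * p1 (D y) + w1 * p2 y * p2 (D y) + w3 * p3 y * p3 (D y) + w4 * p4 y * p4 (D y)
      \<le> - c * (norm y)\<^sup>2" for y
  proof -
    have e1: "p1 (D y) = M12 * p2 y + (- r1) * p1 y"
      using D_expand[OF lD lin_p(1), of y] M11 M13 M14 unfolding M12_def by simp
    have e2: "p2 (D y) = m1 * p2 y"
      using D_expand[OF lD lin_p(2), of y] M21 M22 M23 M24 unfolding m1_def by simp
    have e3: "p3 (D y) = M32 * p2 y + M31 * p1 y + m3 * p3 y"
      using D_expand[OF lD lin_p(3), of y] M33 M34 unfolding M31_def M32_def m3_def by simp
    have e4: "p4 (D y) = M42 * p2 y + M41 * p1 y + M43 * p3 y + m4 * p4 y"
      using D_expand[OF lD lin_p(4), of y] M44 unfolding M41_def M42_def M43_def m4_def by simp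
    have nrm: "(norm y)\<^sup>2 = (p2 y)\<^sup>2 + (p1 y)\<^sup>2 + (p3 y)\<^sup>2 + (p4 y)\<^sup>2" by (simp add: normsq)
    have "w2 * p1 y * p1 (D y) + w1 * p2 y * p2 (D y) + w3 * p3 y * p3 (D y) + w4 * p4 y * p4 (D y)
      = w1 * p2 y * (m1 * p2 y) + w2 * p1 y * (M12 * p2 y + (- r1) * p1 y)
       + w3 * p3 y * (M32 * p2 y + M31 * p1 y + m3 * p3 y)
       + w4 * p4 y * (M42 * p2 y + M41 * p1 y + M43 * p3 y + m4 * p4 y)"
      unfolding e1 e2 e3 e4 by simp
    also have "\<dots> \<le> - c * (norm y)\<^sup>2" unfolding nrm by (rule tri)
    finally show ?thesis .
  qed
  show ?thesis
    using quad_stable[OF fp FD w(2) w(1) w(3) w(4) w(5) Q] unfolding F_def p_def K_def .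
qed

lemma case_ii:
  fixes K1 K2 :: "real \<Rightarrow> real" and a :: "real \<Rightarrow> real \<Rightarrow> real"
  assumes K1s: "smooth1 K1" and K2s: "smooth1 K2" and as: "smooth2 a"
    and K1p: "\<And>u. K1 u > 0" and K2p: "\<And>u. K2 u > 0" and ap: "\<And>u v. a u v > 0"
    and pos: "r1 > 0" "r2 > 0" "h > 0" "e > 0" "s1 > 0" "s2 > 0"
    and dr: "d < r2" and K2d0: "deriv K2 u2s = 0" and a10: "pd1 a u1s u2s = 0"
    and cnd: "r1 / a u1s u2s < K2 u2s * (1 - d / r2)"
    and a11: "pd1 (pd1 a) u1s u2s > 0" and K2dd: "deriv (deriv K2) u2s < 0"
  shows "loc_asymp_stable (hp_field r1 r2 h e d s1 s2 K1 K2 a) (0, K2 u2s * (1 - d / r2), u1s, u2s)"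
proof -
  define F where "F = hp_field r1 r2 h e d s1 s2 K1 K2 a"
  define X where "X = K2 u2s * (1 - d / r2)"
  define A where "A = a u1s u2s"
  define p where "p = (0::real, X, u1s, u2s)"
  have K2: "K2 u2s > 0" using K2p by simp
  have K1: "K1 u1s > 0" using K1p by simp
  have A: "A > 0" unfolding A_def using ap by simp
  have X: "X > 0" unfolding X_def using K2 dr pos by (simp add: field_simps)
  have rel: "r2 * (1 - X / K2 u2s) = d" unfolding X_def using K2 pos by (simp add: field_simps)
  have fp: "F p = 0" unfolding F_def p_def by (simp add: hp_field_def K2d0 a10 rel zero_prod_def)
  have "F differentiable at p" unfolding F_def
    by (rule hp_diff[OF K1s K2s as K1p K2p]) (simp add: p_def)
  then obtain D where FD: "(F has_derivative D) (at p)" unfolding differentiable_def by blast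
  have E: "P (D v) = w" if "bounded_linear P" "\<And>t. P (F (p + t *\<^sub>R v)) = g t" "(g has_real_derivative w) (at 0)" for P v w g
  proof -
    have "(\<lambda>t. P (F (p + t *\<^sub>R v))) = g" using that(2) by auto
    then show ?thesis using dir_deriv[OF FD that(1), of v] that(3) DERIV_unique by metis
  qed
  have M11: "p1 (D (1,0,0,0)) = r1 - A * X"
  proof (rule E[OF lin_p(1)])
    show "p1 (F (p + t *\<^sub>R (1,0,0,0))) = t * (r1 * (1 - t / K1 u1s) - A * X / (1 + h * A * t))" for t
      by (simp add: F_def p_def hp_field_def A_def)
    show "((\<lambda>t. t * (r1 * (1 - t / K1 u1s) - A * X / (1 + h * A * t))) has_real_derivative r1 - A * X) (at 0)"
      using K1 by (auto intro!: derivative_eq_intros)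
  qed
  have M12: "p1 (D (0,1,0,0)) = 0"
    by (rule E[OF lin_p(1), of _ "\<lambda>t. 0"]) (auto simp: F_def p_def hp_field_def intro!: derivative_eq_intros)
  have M13: "p1 (D (0,0,1,0)) = 0"
    by (rule E[OF lin_p(1), of _ "\<lambda>t. 0"]) (auto simp: F_def p_def hp_field_def intro!: derivative_eq_intros)
  have M14: "p1 (D (0,0,0,1)) = 0"
    by (rule E[OF lin_p(1), of _ "\<lambda>t. 0"]) (auto simp: F_def p_def hp_field_def intro!: derivative_eq_intros)
  have M23: "p2 (D (0,0,1,0)) = 0"
    by (rule E[OF lin_p(2), of _ "\<lambda>t. 0"]) (auto simp: F_def p_def hp_field_def rel intro!: derivative_eq_intros)
  have M43: "p4 (D (0,0,1,0)) = 0"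
    by (rule E[OF lin_p(4), of _ "\<lambda>t. 0"]) (auto simp: F_def p_def hp_field_def K2d0 intro!: derivative_eq_intros)
  have M22: "p2 (D (0,1,0,0)) = - d + r2 * (1 - X / K2 u2s) - X * (r2 / K2 u2s)"
  proof -
    have dG: "((\<lambda>s. s * (- d + r2 * (1 - s / K2 u2s))) has_real_derivative - d + r2 * (1 - X / K2 u2s) - X * (r2 / K2 u2s)) (at X)"
      using K2 by (auto intro!: derivative_eq_intros simp: field_simps)
    show ?thesis
      by (rule E[OF lin_p(2) _ shiftD[OF dG]]) (simp add: F_def p_def hp_field_def)
  qed
  have M24: "p2 (D (0,0,0,1)) = 0"
  proof -
    have dG: "((\<lambda>v. X * (- d + r2 * (1 - X / K2 v))) has_real_derivative 0) (at u2s)"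
      using K2 by (auto intro!: derivative_eq_intros smooth1_D[OF K2s] simp: K2d0)
    show ?thesis
      by (rule E[OF lin_p(2) _ shiftD[OF dG]]) (simp add: F_def p_def hp_field_def)
  qed
  have M44: "p4 (D (0,0,0,1)) = s2\<^sup>2 * r2 * X * deriv (deriv K2) u2s / (K2 u2s)\<^sup>2"
  proof -
    have dG: "((\<lambda>v. s2\<^sup>2 * (r2 * X * deriv K2 v / (K2 v)\<^sup>2)) has_real_derivative s2\<^sup>2 * r2 * X * deriv (deriv K2) u2s / (K2 u2s)\<^sup>2) (at u2s)"
      using K2 by (auto intro!: derivative_eq_intros smooth1_D[OF K2s] simp: K2d0 power2_eq_square field_simps)
    show ?thesis
      by (rule E[OF lin_p(4) _ shiftD[OF dG]]) (simp add: F_def p_def hp_field_def)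
  qed
  have M33: "p3 (D (0,0,1,0)) = - (s1\<^sup>2 * (X * pd1 (pd1 a) u1s u2s))"
  proof -
    have dG: "((\<lambda>u. - (s1\<^sup>2 * (X * pd1 a u u2s))) has_real_derivative - (s1\<^sup>2 * (X * pd1 (pd1 a) u1s u2s))) (at u1s)"
      by (auto intro!: derivative_eq_intros pd_D(1)[OF smooth2_diff(2)[OF as]])
    show ?thesis
      by (rule E[OF lin_p(3) _ shiftD[OF dG]]) (simp add: F_def p_def hp_field_def)
  qed
  have lD: "linear D" using FD has_derivative_linear by blast
  define M21 where "M21 = p2 (D (1,0,0,0))"
  define M31 where "M31 = p3 (D (1,0,0,0))"
  define M32 where "M32 = p3 (D (0,1,0,0))"
  define M34 where "M34 = p3 (D (0,0,0,1))"
  define M41 where "M41 = p4 (D (1,0,0,0))"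
  define M42 where "M42 = p4 (D (0,1,0,0))"
  define m1 where "m1 = r1 - A * X"
  define m2 where "m2 = - d + r2 * (1 - X / K2 u2s) - X * (r2 / K2 u2s)"
  define m3 where "m3 = s2\<^sup>2 * r2 * X * deriv (deriv K2) u2s / (K2 u2s)\<^sup>2"
  define m4 where "m4 = - (s1\<^sup>2 * (X * pd1 (pd1 a) u1s u2s))"
  have neg: "m1 < 0" "m2 < 0" "m3 < 0" "m4 < 0"
  proof -
    have "r1 < X * A" using cnd A unfolding X_def A_def by (simp add: divide_less_eq)
    then show "m1 < 0" unfolding m1_def by (simp add: mult.commute)
    have "X * (r2 / K2 u2s) > 0" using X K2 pos by simp
    then show "m2 < 0" unfolding m2_def using rel by linarith
    have "s2\<^sup>2 * r2 * X * deriv (deriv K2) u2s < 0" using pos X K2dd by (simp add: mult_pos_neg)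
    then show "m3 < 0" unfolding m3_def using K2 by (simp add: divide_neg_pos)
    have "s1\<^sup>2 * (X * pd1 (pd1 a) u1s u2s) > 0" using pos X a11 by simp
    then show "m4 < 0" unfolding m4_def by simp
  qed
  obtain w1 w2 w3 w4 c where w: "w1 > 0" "w2 > 0" "w3 > 0" "w4 > 0" "c > 0" and
    tri: "\<And>z1 z2 z3 z4. w1 * z1 * (m1 * z1) + w2 * z2 * (M21 * z1 + m2 * z2)
       + w3 * z3 * (M41 * z1 + M42 * z2 + m3 * z3)
       + w4 * z4 * (M31 * z1 + M32 * z2 + M34 * z3 + m4 * z4) \<le> - c * (z1\<^sup>2 + z2\<^sup>2 + z3\<^sup>2 + z4\<^sup>2)"
    using tri4[of m1 m2 m3 m4 M21 M41 M42 M31 M32 M34, OF neg] by blast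
  have Q: "w1 * p1 y * p1 (D y) + w2 * p2 y * p2 (D y) + w4 * p3 y * p3 (D y) + w3 * p4 y * p4 (D y)
      \<le> - c * (norm y)\<^sup>2" for y
  proof -
    have e1: "p1 (D y) = m1 * p1 y"
      using D_expand[OF lD lin_p(1), of y] M11 M12 M13 M14 unfolding m1_def by simp
    have e2: "p2 (D y) = M21 * p1 y + m2 * p2 y"
      using D_expand[OF lD lin_p(2), of y] M22 M23 M24 unfolding M21_def m2_def by simp
    have e3: "p3 (D y) = M31 * p1 y + M32 * p2 y + M34 * p4 y + m4 * p3 y"
      using D_expand[OF lD lin_p(3), of y] M33 unfolding M31_def M32_def M34_def m4_def by simp
    have e4: "p4 (D y) = M41 * p1 y + M42 * p2 y + m3 * p4 y"
      using D_expand[OF lD lin_p(4), of y] M43 M44 unfolding M41_def M42_def m3_def by simp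
    have nrm: "(norm y)\<^sup>2 = (p1 y)\<^sup>2 + (p2 y)\<^sup>2 + (p4 y)\<^sup>2 + (p3 y)\<^sup>2" by (simp add: normsq)
    have "w1 * p1 y * p1 (D y) + w2 * p2 y * p2 (D y) + w4 * p3 y * p3 (D y) + w3 * p4 y * p4 (D y)
      = w1 * p1 y * (m1 * p1 y) + w2 * p2 y * (M21 * p1 y + m2 * p2 y)
       + w3 * p4 y * (M41 * p1 y + M42 * p2 y + m3 * p4 y)
       + w4 * p3 y * (M31 * p1 y + M32 * p2 y + M34 * p4 y + m4 * p3 y)"
      unfolding e1 e2 e3 e4 by simp
    also have "\<dots> \<le> - c * (norm y)\<^sup>2" unfolding nrm by (rule tri)
    finally show ?thesis .
  qed
  show ?thesis
    using quad_stable[OF fp FD w(1) w(2) w(4) w(3) w(5) Q] unfolding F_def p_def X_def .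
qed


theorem corollary1:
  fixes K1 K2 :: "real \<Rightarrow> real" and a :: "real \<Rightarrow> real \<Rightarrow> real"
    and r1 r2 h e d s1 s2 u1s u2s :: real
  assumes K1_pos: "\<And>u. K1 u > 0" and K2_pos: "\<And>u. K2 u > 0"
    and a_pos: "\<And>u v. a u v > 0"
    and K1_bdd: "bdd_above (range K1)" and K2_bdd: "bdd_above (range K2)"
    and a_bdd: "bdd_above (range (\<lambda>(u, v). a u v))"
    and K1_smooth: "smooth1 K1" and K2_smooth: "smooth1 K2" and a_smooth: "smooth2 a"
    and d_nonneg: "d \<ge> 0"
    and pos: "r1 > 0" "r2 > 0" "h > 0" "e > 0" "s1 > 0" "s2 > 0"
  shows
    "(deriv K1 u1s = 0 \<and> pd2 a u1s u2s = 0 \<longrightarrow>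
        is_equilibrium (hp_field r1 r2 h e d s1 s2 K1 K2 a) (K1 u1s, 0, u1s, u2s) \<and>
        (0 < e * a u1s u2s * K1 u1s / (1 + h * a u1s u2s * K1 u1s) \<and>
         e * a u1s u2s * K1 u1s / (1 + h * a u1s u2s * K1 u1s) < d - r2 \<and>
         deriv (deriv K1) u1s < 0 \<and> pd2 (pd2 a) u1s u2s < 0 \<longrightarrow>
           loc_asymp_stable (hp_field r1 r2 h e d s1 s2 K1 K2 a) (K1 u1s, 0, u1s, u2s)))
     \<and>
     (d < r2 \<and> deriv K2 u2s = 0 \<and> pd1 a u1s u2s = 0 \<longrightarrow>
        is_equilibrium (hp_field r1 r2 h e d s1 s2 K1 K2 a) (0, K2 u2s * (1 - d / r2), u1s, u2s) \<and>
        (r1 / a u1s u2s < K2 u2s * (1 - d / r2) \<and>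
         pd1 (pd1 a) u1s u2s > 0 \<and> deriv (deriv K2) u2s < 0 \<longrightarrow>
           loc_asymp_stable (hp_field r1 r2 h e d s1 s2 K1 K2 a) (0, K2 u2s * (1 - d / r2), u1s, u2s)))"
  proof (intro conjI impI)
  assume h1: "deriv K1 u1s = 0 \<and> pd2 a u1s u2s = 0"
  show "is_equilibrium (hp_field r1 r2 h e d s1 s2 K1 K2 a) (K1 u1s, 0, u1s, u2s)"
    using h1 by (simp add: is_equilibrium_def hp_field_def zero_prod_def)
  assume h2: "0 < e * a u1s u2s * K1 u1s / (1 + h * a u1s u2s * K1 u1s) \<and>
         e * a u1s u2s * K1 u1s / (1 + h * a u1s u2s * K1 u1s) < d - r2 \<and>
         deriv (deriv K1) u1s < 0 \<and> pd2 (pd2 a) u1s u2s < 0"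
  show "loc_asymp_stable (hp_field r1 r2 h e d s1 s2 K1 K2 a) (K1 u1s, 0, u1s, u2s)"
    using h1 h2 by (intro case_i[OF K1_smooth K2_smooth a_smooth K1_pos K2_pos a_pos pos]) auto
next
  assume h1: "d < r2 \<and> deriv K2 u2s = 0 \<and> pd1 a u1s u2s = 0"
  show "is_equilibrium (hp_field r1 r2 h e d s1 s2 K1 K2 a) (0, K2 u2s * (1 - d / r2), u1s, u2s)"
  proof -
    have "r2 * (1 - K2 u2s * (1 - d / r2) / K2 u2s) = d" using K2_pos[of u2s] pos by (simp add: field_simps)
    then show ?thesis using h1 by (simp add: is_equilibrium_def hp_field_def zero_prod_def)
  qed
  assume h2: "r1 / a u1s u2s < K2 u2s * (1 - d / r2) \<and>
         pd1 (pd1 a) u1s u2s > 0 \<and> deriv (deriv K2) u2s < 0"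
  show "loc_asymp_stable (hp_field r1 r2 h e d s1 s2 K1 K2 a) (0, K2 u2s * (1 - d / r2), u1s, u2s)"
    using h1 h2 by (intro case_ii[OF K1_smooth K2_smooth a_smooth K1_pos K2_pos a_pos pos]) auto
qed

end
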